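(* Let $p$ be a prime, $m$ a positive integer, $e=1$, and $b\ge2$ an integer with $b\leq p$. Then $d_b(\mathcal{C}_i)=i+b$ for each $0\leq i\leq p-b$.
   Context: For $0\le i\le p^e$, $\mathcal{C}_i$ denotes the cyclic code $\langle (x-1)^i\rangle\subseteq \mathbb{F}_{p^m}[x]/\langle x^{p^e}-1\rangle$, with polynomials identified with their coefficient vectors in $\mathbb{F}_{p^m}^{p^e}$. For $c\in\mathbb{F}_{p^m}^{n}$, $\pi_b(c)$ is the list of the $n$ cyclically consecutive $b$-tuples $(c_j,\dots,c_{j+b-1})$ (indices mod $n$), $d_b(c,c')=d_H(\pi_b(c),\pi_b(c'))$, and $d_b(\mathcal{C})$ is the minimum of $d_b(c,c')$ over distinct $c,c'\in\mathcal{C}$. *)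

theory Defs
  imports "HOL-Computational_Algebra.Polynomial"
begin

definition coeff_vec :: "nat \<Rightarrow> 'a::field poly \<Rightarrow> 'a list" where
  "coeff_vec n q = map (coeff (q mod (monom 1 n - 1))) [0..<n]"

text \<open>The cyclic code C_i = ideal generated by (x-1)^i in F[x]/(x^(p^e) - 1),
  as a set of coefficient vectors of length p^e.\<close>
definition cyc_code :: "nat \<Rightarrow> nat \<Rightarrow> nat \<Rightarrow> 'a::field list set" where
  "cyc_code p e i = {coeff_vec (p ^ e) (f * [:-1, 1:] ^ i) | f. True}"

definition pi_b :: "nat \<Rightarrow> 'a list \<Rightarrow> 'a list list" where
  "pi_b b c = map (\<lambda>j. map (\<lambda>k. c ! ((j + k) mod length c)) [0..<b]) [0..<length c]"

definition hamming :: "'a list \<Rightarrow> 'a list \<Rightarrow> nat" where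
  "hamming xs ys = card {j. j < length xs \<and> xs ! j \<noteq> ys ! j}"

definition b_dist :: "nat \<Rightarrow> 'a list \<Rightarrow> 'a list \<Rightarrow> nat" where
  "b_dist b c c' = hamming (pi_b b c) (pi_b b c')"

definition b_min_dist :: "nat \<Rightarrow> 'a list set \<Rightarrow> nat" where
  "b_min_dist b C = Min {b_dist b c c' | c c'. c \<in> C \<and> c' \<in> C \<and> c \<noteq> c'}"

end

theory Submission imports Defs "HOL-Number_Theory.Residues" "HOL-Computational_Algebra.Primes"
begin
hide_const (open) UnivPoly.monom UnivPoly.coeff UnivPoly.deg Coset.order module.smult

lemma char_eq:
  assumes "prime p" "m > 0" "card (UNIV :: 'a::{finite,field} set) = p ^ m"
  shows "CHAR('a) = p"
proof -
  have pos: "CHAR('a) > 0" by (rule finite_imp_CHAR_pos) simp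
  have pr: "prime CHAR('a)" using prime_CHAR_semidom[OF pos] .
  have "CHAR('a) dvd p ^ m" using CHAR_dvd_CARD[where 'a='a] assms(3) by simp
  then have "CHAR('a) dvd p" using pr prime_dvd_power by blast
  then show ?thesis using pr assms(1) primes_dvd_imp_eq by blast
qed

lemma xp_minus_1:
  assumes "CHAR('a::field) = p" "prime p"
  shows "(monom 1 p - 1 :: 'a poly) = [:-1, 1:] ^ p"
proof -
  have c: "CHAR('a poly) = p" using assms by simp
  have "[:-1, 1:] = (monom (1::'a) 1 + (-1))" by (simp add: monom_Suc one_pCons)
  have fd: "(monom (1::'a) 1 + (-1)) ^ p = monom (1::'a) 1 ^ p + (-1) ^ p"
    by (rule freshmans_dream) (simp_all add: assms)
  have "[:-1, 1:] ^ p = monom (1::'a) 1 ^ p + (-1) ^ p"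
    unfolding fd[symmetric] using \<open>[:-1, 1:] = _\<close> by simp
  also have "(-1 :: 'a poly) ^ p = - (1 ^ p)"
    using minus_power_prime_CHAR[of p "1::'a poly"] c assms(2) by simp
  finally show ?thesis by (simp add: monom_power)
qed



lemma nz_finite: "finite {k. coeff (d::'a::zero poly) k \<noteq> 0}"
  by (rule finite_subset[of _ "{..degree d}"]) (auto intro: le_degree)

lemma of_nat_nz:
  assumes "CHAR('a::field) = p" "0 < k" "k < p"
  shows "(of_nat k :: 'a) \<noteq> 0"
  using assms of_nat_eq_0_iff_char_dvd[of k, where 'a='a] by (auto dest: dvd_imp_le)

lemma dvd_shift:
  fixes d1 :: "'a::field poly"
  assumes "[:-1,1:]^n dvd [:0,1:] * d1" "d1 \<noteq> 0"
  shows "[:-1,1:]^n dvd d1"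
proof -
  have nz: "[:0,1:] * d1 \<noteq> 0" using assms(2) by simp
  have "n \<le> Polynomial.order 1 ([:0,1:] * d1)" using assms(1) nz order_divides by blast
  also have "Polynomial.order 1 ([:0,1:] * d1) = Polynomial.order 1 [:0,1::'a:] + Polynomial.order 1 d1"
    using nz by (rule order_mult)
  also have "Polynomial.order 1 [:0,(1::'a):] = 0" by (rule order_0I) simp
  finally show ?thesis using order_divides by auto
qed

lemma dvd_pderiv:
  fixes d :: "'a::field poly"
  assumes "[:-1,1:]^Suc i dvd d"
  shows "[:-1,1:]^i dvd pderiv d"
proof -
  obtain h where h: "d = [:-1,1:]^Suc i * h" using assms by blast
  have "pderiv d = smult (of_nat (Suc i)) ([:-1,1:]^i) * pderiv [:-1,1:] * h + [:-1,1:]^Suc i * pderiv h"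
    unfolding h pderiv_mult pderiv_power_Suc by (simp add: mult_ac)
  also have "[:-1,1:]^i dvd \<dots>"
  proof (rule dvd_add)
    show "[:-1,1:]^i dvd smult (of_nat (Suc i)) ([:-1,1:]^i) * pderiv [:-1,1:] * h"
      by (intro dvd_mult2 dvd_smult) simp
    show "[:-1,1:]^i dvd [:-1,1:]^Suc i * pderiv h"
      by (intro dvd_mult2 le_imp_power_dvd) simp
  qed
  finally show ?thesis .
qed

lemma key:
  fixes d :: "'a::field poly"
  assumes ch: "CHAR('a) = p"
  shows "d \<noteq> 0 \<Longrightarrow> degree d < p \<Longrightarrow> [:-1,1:]^i dvd d \<Longrightarrow> i < card {k. coeff d k \<noteq> 0}"
proof (induction "degree d" arbitrary: d i rule: less_induct)
  case less
  show ?case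
  proof (cases i)
    case 0
    have "degree d \<in> {k. coeff d k \<noteq> 0}" using less.prems by simp
    then have "{k. coeff d k \<noteq> 0} \<noteq> {}" by blast
    then show ?thesis using 0 nz_finite by (simp add: card_gt_0_iff)
  next
    case (Suc j)
    show ?thesis
    proof (cases "coeff d 0 = 0")
      case True
      have "monom 1 1 dvd d" using True by (simp add: monom_1_dvd_iff')
      then obtain d1 where d1: "d = [:0,1:] * d1" by (auto simp: monom_Suc one_pCons)
      have d1nz: "d1 \<noteq> 0" using less.prems d1 by auto
      have deg: "degree d = Suc (degree d1)" using d1 d1nz by (simp add: degree_mult_eq)
      have dv: "[:-1,1:]^i dvd d1" using dvd_shift less.prems(3) d1 d1nz by blast
      have "i < card {k. coeff d1 k \<noteq> 0}"
        using less.hyps[of d1 i] deg d1nz less.prems(2) dv by simp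
      moreover have "{k. coeff d k \<noteq> 0} = Suc ` {k. coeff d1 k \<noteq> 0}"
      proof (rule Set.set_eqI)
        fix k show "k \<in> {k. coeff d k \<noteq> 0} \<longleftrightarrow> k \<in> Suc ` {k. coeff d1 k \<noteq> 0}"
          using True unfolding d1 by (cases k) (auto simp: image_iff)
      qed
      ultimately show ?thesis by (simp add: card_image)
    next
      case False
      have dv: "[:-1,1:]^j dvd pderiv d" using dvd_pderiv less.prems(3) Suc by simp
      have "[:-1,1:] dvd d" using less.prems(3) Suc by (meson dvd_power dvd_trans zero_less_Suc)
      then have pz: "poly d 1 = 0" by (simp add: dvd_iff_poly_eq_0)
      have "degree d \<noteq> 0"
      proof
        assume "degree d = 0"
        then obtain c where "d = [:c:]" by (rule degree_eq_zeroE)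
        then show False using pz less.prems(1) by simp
      qed
      then have pos: "0 < degree d" by simp
      have cz: "(coeff (pderiv d) k = 0) = (coeff d (Suc k) = 0)" if kd: "k < degree d" for k
      proof -
        have "(of_nat (Suc k)::'a) \<noteq> 0" using of_nat_nz[OF ch, of "Suc k"] less.prems(2) kd by simp
        then show ?thesis by (simp add: coeff_pderiv)
      qed
      have cz2: "\<And>k. k \<ge> degree d \<Longrightarrow> coeff (pderiv d) k = 0 \<and> coeff d (Suc k) = 0"
        by (simp add: coeff_pderiv coeff_eq_0)
      have eqs: "{k. coeff (pderiv d) k \<noteq> 0} = {k. coeff d (Suc k) \<noteq> 0}"
        using cz cz2 by (metis linorder_not_le)
      have pnz: "pderiv d \<noteq> 0"
      proof
        assume "pderiv d = 0"
        then have "coeff (pderiv d) (degree d - 1) = 0" by simp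
        then have "coeff d (degree d) = 0" using cz[of "degree d - 1"] pos by simp
        then show False using less.prems(1) by simp
      qed
      have "degree (pderiv d) \<le> degree d - 1"
        using cz2 by (intro degree_le) auto
      then have dg: "degree (pderiv d) < degree d" using pos by simp
      have "j < card {k. coeff (pderiv d) k \<noteq> 0}"
        using less.hyps[OF dg pnz] less.prems(2) dg dv by simp
      moreover have "{k. coeff d k \<noteq> 0} = insert 0 (Suc ` {k. coeff (pderiv d) k \<noteq> 0})"
        unfolding eqs
      proof (rule Set.set_eqI)
        fix k show "k \<in> {k. coeff d k \<noteq> 0} \<longleftrightarrow> k \<in> insert 0 (Suc ` {k. coeff d (Suc k) \<noteq> 0})"
          using False by (cases k) (auto simp: image_iff)
      qed
      moreover have "card (insert 0 (Suc ` {k. coeff (pderiv d) k \<noteq> 0})) = Suc (card {k. coeff (pderiv d) k \<noteq> 0})"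
        using nz_finite[of "pderiv d"] by (simp add: card_image)
      ultimately show ?thesis using Suc by simp
    qed
  qed
qed



definition Wb :: "nat \<Rightarrow> nat \<Rightarrow> nat set \<Rightarrow> nat set" where
  "Wb p b S = {j. j < p \<and> (\<exists>k<b. (j + k) mod p \<in> S)}"

lemma Wb_sub: "Wb p b S \<subseteq> {..<p}" by (auto simp: Wb_def)

lemma Wb_mono: "S \<subseteq> T \<Longrightarrow> Wb p b S \<subseteq> Wb p b T" by (auto simp: Wb_def)

lemma closed_down:
  assumes "A \<subseteq> {..<p}" "\<forall>j<p. Suc j mod p \<in> A \<longrightarrow> j \<in> A" "x \<in> A"
  shows "d \<le> x \<Longrightarrow> x - d \<in> A"
proof (induction d)
  case 0 then show ?case using assms by simp
next
  case (Suc d)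
  then have "x - d \<in> A" by simp
  moreover have "x < p" using assms by auto
  moreover have "x - Suc d < p" using \<open>x < p\<close> by simp
  moreover have "Suc (x - Suc d) = x - d" using Suc.prems by simp
  moreover have "x - d < p" using \<open>x < p\<close> by simp
  ultimately have "Suc (x - Suc d) mod p \<in> A" by simp
  moreover have "Suc (x - Suc d) mod p \<in> A \<longrightarrow> x - Suc d \<in> A"
    using assms(2) \<open>x - Suc d < p\<close> by blast
  ultimately show ?case by blast
qed

lemma closed_all:
  assumes "0 < p" "A \<subseteq> {..<p}" "\<forall>j<p. Suc j mod p \<in> A \<longrightarrow> j \<in> A" "A \<noteq> {}"
  shows "A = {..<p}"
proof -
  obtain a where a: "a \<in> A" using assms by blast
  have "a - a \<in> A" using closed_down[OF assms(2,3) a, of a] by simp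
  then have "Suc (p - 1) mod p \<in> A" using assms(1) by simp
  moreover have "p - 1 < p" using assms(1) by simp
  ultimately have pm: "p - 1 \<in> A" using assms(3) by blast
  have "j \<in> A" if "j < p" for j
    using closed_down[OF assms(2,3) pm, of "p - 1 - j"] that by simp
  then show ?thesis using assms(2) by blast
qed

lemma Wb_Suc:
  assumes "1 \<le> b"
  shows "Wb p (Suc b) S = Wb p b S \<union> {j. j < p \<and> Suc j mod p \<in> Wb p b S}"
proof (rule Set.set_eqI)
  fix j
  show "j \<in> Wb p (Suc b) S \<longleftrightarrow> j \<in> Wb p b S \<union> {j. j < p \<and> Suc j mod p \<in> Wb p b S}"
  proof
    assume "j \<in> Wb p (Suc b) S"
    then obtain k where k: "j < p" "k < Suc b" "(j + k) mod p \<in> S" by (auto simp: Wb_def)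
    show "j \<in> Wb p b S \<union> {j. j < p \<and> Suc j mod p \<in> Wb p b S}"
    proof (cases "k < b")
      case True then show ?thesis using k by (auto simp: Wb_def)
    next
      case False
      then have kb: "k = b" using k by simp
      have "(Suc j mod p + (b - 1)) mod p = (Suc j + (b - 1)) mod p" by (rule mod_add_left_eq)
      also have "Suc j + (b - 1) = j + k" using kb assms by simp
      finally have "(Suc j mod p + (b - 1)) mod p = (j + k) mod p" .
      then have "Suc j mod p \<in> Wb p b S" using k assms kb
        unfolding Wb_def by (intro CollectI conjI exI[of _ "b - 1"]) auto
      then show ?thesis using k by simp
    qed
  next
    assume "j \<in> Wb p b S \<union> {j. j < p \<and> Suc j mod p \<in> Wb p b S}"
    then show "j \<in> Wb p (Suc b) S"
    proof
      assume "j \<in> Wb p b S" then show ?thesis unfolding Wb_def using less_SucI by blast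
    next
      assume "j \<in> {j. j < p \<and> Suc j mod p \<in> Wb p b S}"
      then obtain k where k: "j < p" "k < b" "(Suc j mod p + k) mod p \<in> S" by (auto simp: Wb_def)
      have "(Suc j mod p + k) mod p = (j + Suc k) mod p" by (simp add: mod_add_left_eq)
      then show ?thesis unfolding Wb_def using k by (intro CollectI conjI exI[of _ "Suc k"]) auto
    qed
  qed
qed

lemma Wb_growth:
  assumes "0 < p" "S \<subseteq> {..<p}" "S \<noteq> {}"
  shows "1 \<le> b \<Longrightarrow> min p (card S + b - 1) \<le> card (Wb p b S)"
proof (induction b)
  case 0 then show ?case by simp
next
  case (Suc b)
  have SW: "S \<subseteq> Wb p c S" if "c \<noteq> 0" for c
  proof
    fix x assume x: "x \<in> S"
    then have "x < p" using assms(2) by blast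
    then show "x \<in> Wb p c S" unfolding Wb_def using x that
      by (intro CollectI conjI exI[of _ 0]) auto
  qed
  show ?case
  proof (cases "b = 0")
    case True
    have "Wb p 1 S \<subseteq> S" unfolding Wb_def by auto
    then have "Wb p 1 S = S" using SW[of 1] by blast
    then show ?thesis using True by simp
  next
    case False
    let ?A = "Wb p b S"
    let ?B = "Wb p (Suc b) S"
    have WS: "?B = ?A \<union> {j. j < p \<and> Suc j mod p \<in> ?A}"
      using False by (intro Wb_Suc) simp
    have IH: "min p (card S + b - 1) \<le> card ?A" using Suc.IH False by simp
    have fin: "finite ?B" by (rule finite_subset[OF Wb_sub]) simp
    have SA: "S \<subseteq> ?A" using SW False by blast
    show ?thesis
    proof (cases "?A = {..<p}")
      case True
      have "?A \<subseteq> ?B" using WS by blast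
      then have "card ?A \<le> card ?B" using fin card_mono by blast
      then show ?thesis using True by simp
    next
      case nf: False
      have "\<not> (\<forall>j<p. Suc j mod p \<in> ?A \<longrightarrow> j \<in> ?A)"
        using closed_all[OF assms(1) Wb_sub] nf SA assms(3) by blast
      then obtain j where j: "j < p" "Suc j mod p \<in> ?A" "j \<notin> ?A" by blast
      have "insert j ?A \<subseteq> ?B" using WS j by blast
      then have "card (insert j ?A) \<le> card ?B" using fin card_mono by blast
      moreover have "finite ?A" by (rule finite_subset[OF Wb_sub]) simp
      then have "card (insert j ?A) = Suc (card ?A)"
        using j(3) by simp
      ultimately show ?thesis using IH by linarith
    qed
  qed
qed

lemma Wb_upper:
  assumes "i + b \<le> p" "1 \<le> b"
  shows "card (Wb p b {..i}) \<le> i + b"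
proof -
  have "Wb p b {..i} \<subseteq> {..i} \<union> {p - b + 1..<p}"
  proof
    fix j assume "j \<in> Wb p b {..i}"
    then obtain k where k: "j < p" "k < b" "(j + k) mod p \<le> i" by (auto simp: Wb_def)
    show "j \<in> {..i} \<union> {p - b + 1..<p}"
    proof (rule ccontr)
      assume "j \<notin> {..i} \<union> {p - b + 1..<p}"
      then have "i < j" "j \<le> p - b" using k by auto
      then have "j + k < p" using k assms by linarith
      then show False using k \<open>i < j\<close> by simp
    qed
  qed
  then have "card (Wb p b {..i}) \<le> card ({..i} \<union> {p - b + 1..<p})" by (intro card_mono) auto
  also have "\<dots> \<le> card {..i} + card {p - b + 1..<p}" by (rule card_Un_le)
  also have "\<dots> = i + b" using assms by simp
  finally show ?thesis .
qed

lemma bdist_eq: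
  assumes "length c = p" "length c' = p" "0 < p"
  shows "b_dist b c c' = card (Wb p b {k. k < p \<and> c ! k \<noteq> c' ! k})"
proof -
  have "{j. j < length (pi_b b c) \<and> pi_b b c ! j \<noteq> pi_b b c' ! j} = Wb p b {k. k < p \<and> c ! k \<noteq> c' ! k}"
  proof (rule Set.set_eqI)
    fix j
    show "j \<in> {j. j < length (pi_b b c) \<and> pi_b b c ! j \<noteq> pi_b b c' ! j} \<longleftrightarrow> j \<in> Wb p b {k. k < p \<and> c ! k \<noteq> c' ! k}"
    proof (cases "j < p")
      case True
      have "pi_b b c ! j \<noteq> pi_b b c' ! j \<longleftrightarrow> (\<exists>k<b. c ! ((j + k) mod p) \<noteq> c' ! ((j + k) mod p))"
        using True assms by (simp add: pi_b_def map_eq_conv) (meson atLeastLessThan_iff zero_le)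
      then show ?thesis using True assms by (simp add: Wb_def pi_b_def)
    next
      case False
      then show ?thesis using assms by (simp add: Wb_def pi_b_def)
    qed
  qed
  then show ?thesis by (simp add: b_dist_def hamming_def)
qed



lemma degX: "degree ([:-1,1::'a::field:]^i) = i" by (rule degree_linear_power)

lemma codeword:
  assumes ch: "CHAR('a::field) = p" and pr: "prime p" and ip: "i \<le> p" and cC: "c \<in> cyc_code p 1 i"
  shows "\<exists>r::'a poly. c = map (coeff r) [0..<p] \<and> (\<forall>k\<ge>p. coeff r k = 0) \<and> [:-1,1:]^i dvd r"
proof -
  obtain f :: "'a poly" where c: "c = coeff_vec (p^1) (f * [:-1,1:]^i)" using cC by (auto simp: cyc_code_def)
  define r where "r = (f * [:-1,1::'a:]^i) mod [:-1,1:]^p"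
  have M: "monom 1 p - 1 = [:-1,1::'a:]^p" by (rule xp_minus_1) (simp_all add: ch pr)
  have c2: "c = map (coeff r) [0..<p]" by (simp add: c coeff_vec_def r_def M)
  have "r = 0 \<or> degree r < degree ([:-1,1::'a:]^p)" unfolding r_def by (rule degree_mod_less) simp
  then have "r = 0 \<or> degree r < p" by (simp add: degX)
  then have hi: "\<forall>k\<ge>p. coeff r k = 0" by (auto intro: coeff_eq_0)
  have "[:-1,1:]^i dvd r" unfolding r_def by (rule dvd_mod) (simp_all add: le_imp_power_dvd ip)
  then show ?thesis using c2 hi by blast
qed

lemma lower:
  assumes ch: "CHAR('a::field) = p" and pr: "prime p" and ib: "i + b \<le> p" and b1: "1 \<le> b"
    and cC: "c \<in> cyc_code p 1 i" and cC': "c' \<in> cyc_code p 1 i" and ne: "c \<noteq> c'"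
  shows "i + b \<le> b_dist b c (c'::'a list)"
proof -
  have ip: "i \<le> p" using ib by simp
  have p0: "0 < p" using pr prime_gt_0_nat by blast
  obtain r where r: "c = map (coeff r) [0..<p]" "\<forall>k\<ge>p. coeff r k = 0" "[:-1,1:]^i dvd r"
    using codeword[OF ch pr ip cC] by blast
  obtain r' where r': "c' = map (coeff r') [0..<p]" "\<forall>k\<ge>p. coeff r' k = 0" "[:-1,1:]^i dvd r'"
    using codeword[OF ch pr ip cC'] by blast
  define d where "d = r - r'"
  have lc: "length c = p" "length c' = p" using r r' by auto
  have S: "{k. coeff d k \<noteq> 0} = {k. k < p \<and> c ! k \<noteq> c' ! k}"
  proof (rule Set.set_eqI)
    fix k show "k \<in> {k. coeff d k \<noteq> 0} \<longleftrightarrow> k \<in> {k. k < p \<and> c ! k \<noteq> c' ! k}"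
      using r(1,2) r'(1,2) by (cases "k < p") (auto simp: d_def)
  qed
  have dnz: "d \<noteq> 0"
  proof
    assume "d = 0"
    then have "r = r'" by (simp add: d_def)
    then show False using ne r(1) r'(1) by simp
  qed
  have "degree d \<le> p - 1" using r(2) r'(2) p0 by (intro degree_le) (auto simp: d_def)
  then have dp: "degree d < p" using p0 by linarith
  have dv: "[:-1,1:]^i dvd d" unfolding d_def using r(3) r'(3) by (rule dvd_diff)
  have "i < card {k. coeff d k \<noteq> 0}" by (rule key[OF ch dnz dp dv])
  then have ci: "i < card {k. k < p \<and> c ! k \<noteq> c' ! k}" using S by simp
  have ne2: "{k. k < p \<and> c ! k \<noteq> c' ! k} \<noteq> {}" using ci by (metis card.empty not_less0)
  have sub: "{k. k < p \<and> c ! k \<noteq> c' ! k} \<subseteq> {..<p}" by auto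
  have "min p (card {k. k < p \<and> c ! k \<noteq> c' ! k} + b - 1) \<le> card (Wb p b {k. k < p \<and> c ! k \<noteq> c' ! k})"
    by (rule Wb_growth[OF p0 sub ne2 b1])
  moreover have "b_dist b c c' = card (Wb p b {k. k < p \<and> c ! k \<noteq> c' ! k})"
    using bdist_eq[OF lc p0] .
  ultimately show ?thesis using ci ib b1 by linarith
qed



theorem proposition2p7:
  fixes p m b i :: nat
  assumes "prime p" and "m > 0" and "card (UNIV :: 'a set) = p ^ m"
    and "2 \<le> b" and "b \<le> p" and "i \<le> p - b"
  shows "b_min_dist b (cyc_code p 1 i :: ('a::{finite,field}) list set) = i + b"
proof -
  have ch: "CHAR('a) = p" by (rule char_eq[OF assms(1,2,3)])
  have ib: "i + b \<le> p" using assms(5,6) by simp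
  have b1: "1 \<le> b" using assms(4) by simp
  have p0: "0 < p" using assms(1) prime_gt_0_nat by blast
  let ?C = "cyc_code p 1 i :: 'a list set"
  let ?D = "{b_dist b c c' | c c'. c \<in> ?C \<and> c' \<in> ?C \<and> c \<noteq> c'}"
  have M: "monom 1 p - 1 = [:-1,1::'a:]^p" by (rule xp_minus_1) (simp_all add: ch assms(1))
  define c0 where "c0 = coeff_vec (p^1) (1 * [:-1,1::'a:]^i)"
  define c1 where "c1 = coeff_vec (p^1) (0 * [:-1,1::'a:]^i)"
  have c0C: "c0 \<in> ?C" unfolding c0_def cyc_code_def by blast
  have c1C: "c1 \<in> ?C" unfolding c1_def cyc_code_def by blast
  have "[:-1,1::'a:]^i mod [:-1,1::'a:]^p = [:-1,1::'a:]^i"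
    by (rule mod_poly_less) (use ib b1 in \<open>simp add: degX\<close>)
  then have c0e: "c0 = map (coeff ([:-1,1::'a:]^i)) [0..<p]" by (simp add: c0_def coeff_vec_def M)
  have c1e: "c1 = map (\<lambda>_. 0) [0..<p]" by (simp add: c1_def coeff_vec_def)
  have lead: "coeff ([:-1,1::'a:]^i) i = 1"
    using lead_coeff_power[of "[:-1,1::'a:]" i] by (simp add: degX)
  have ilp: "i < p" using ib b1 by linarith
  have ne: "c0 \<noteq> c1"
  proof
    assume "c0 = c1"
    then have "c0 ! i = c1 ! i" by simp
    then show False using lead ilp by (simp add: c0e c1e)
  qed
  have lc: "length c0 = p" "length c1 = p" by (simp_all add: c0e c1e)
  have S0: "{k. k < p \<and> c0 ! k \<noteq> c1 ! k} \<subseteq> {..i}"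
  proof
    fix k assume "k \<in> {k. k < p \<and> c0 ! k \<noteq> c1 ! k}"
    then have kp: "k < p" and "c0 ! k \<noteq> c1 ! k" by simp_all
    then have "coeff ([:-1,1::'a:]^i) k \<noteq> 0" by (simp add: c0e c1e)
    then show "k \<in> {..i}" using coeff_eq_0[of "[:-1,1::'a:]^i" k] by (force simp: degX)
  qed
  have "b_dist b c0 c1 = card (Wb p b {k. k < p \<and> c0 ! k \<noteq> c1 ! k})" by (rule bdist_eq[OF lc p0])
  also have "\<dots> \<le> card (Wb p b {..i})"
    by (rule card_mono) (simp_all add: finite_subset[OF Wb_sub] Wb_mono[OF S0])
  also have "\<dots> \<le> i + b" by (rule Wb_upper[OF ib b1])
  finally have up: "b_dist b c0 c1 \<le> i + b" .
  have low: "\<And>c c'. c \<in> ?C \<Longrightarrow> c' \<in> ?C \<Longrightarrow> c \<noteq> c' \<Longrightarrow> i + b \<le> b_dist b c c'"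
    using lower[OF ch assms(1) ib b1] by blast
  have inD: "i + b \<in> ?D"
  proof -
    have "b_dist b c0 c1 = i + b" using up low[OF c0C c1C ne] by simp
    then have "\<exists>c c'. i + b = b_dist b c c' \<and> c \<in> ?C \<and> c' \<in> ?C \<and> c \<noteq> c'"
      using c0C c1C ne by metis
    then show ?thesis by simp
  qed
  have finD: "finite ?D"
  proof (rule finite_subset[of _ "{..p}"])
    show "?D \<subseteq> {..p}"
    proof
      fix x assume "x \<in> ?D"
      then obtain c c' where x: "x = b_dist b c c'" "c \<in> ?C" "c' \<in> ?C" by blast
      obtain r where "c = map (coeff r) [0..<p]" using codeword[OF ch assms(1) _ x(2)] ib by auto
      then have l1: "length c = p" by simp
      obtain r' where "c' = map (coeff r') [0..<p]" using codeword[OF ch assms(1) _ x(3)] ib by auto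
      then have l2: "length c' = p" by simp
      have "x = card (Wb p b {k. k < p \<and> c ! k \<noteq> c' ! k})" using x(1) bdist_eq[OF l1 l2 p0] by simp
      also have "\<dots> \<le> card {..<p}" by (rule card_mono) (simp_all add: Wb_sub)
      finally show "x \<in> {..p}" by simp
    qed
  qed simp
  show ?thesis unfolding b_min_dist_def
  proof (rule Min_eqI[OF finD])
    fix y assume "y \<in> ?D"
    then show "i + b \<le> y" using low by blast
  qed (rule inD)
qed

end
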